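(* Let $C,r>1$ and $n>(Cr)^8$. Suppose $H$ is sampled from a $Cr/n$-spread distribution on subgraphs of $K_{n,n}$. Then with probability at least $1-n^{-40}$ there do not exist disjoint sets $S,T\subset V(K_{n,n})$ with $|T|=20|S|<\sqrt n$ together with pairwise distinct unordered pairs $\{s^1_t,s^2_t\}$ ($t\in T$) of distinct vertices such that each $s^i_t\in S$ and $ts^i_t\in E(H)$ for $i=1,2$.
   Context: A random subgraph $H$ of $K_{n,n}$ is $q$-spread if $\mathbb{P}(S\subset H)\le q^{|S|}$ for every $S\subset E(K_{n,n})$. *)

theory Defs
  imports "HOL-Probability.Probability_Mass_Function"
begin

text \<open>K_{n,n}: vertices (False,i) (left side) and (True,j) (right side), i,j < n.
  The edge (i,j) joins left vertex i and right vertex j.\<close>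

definition KVert :: "nat \<Rightarrow> (bool \<times> nat) set" where
  "KVert n = UNIV \<times> {..<n}"

definition KEdges :: "nat \<Rightarrow> (nat \<times> nat) set" where
  "KEdges n = {..<n} \<times> {..<n}"

definition adj :: "(nat \<times> nat) set \<Rightarrow> bool \<times> nat \<Rightarrow> bool \<times> nat \<Rightarrow> bool" where
  "adj H u v \<longleftrightarrow> (\<exists>i j. (i, j) \<in> H \<and>
      ((u = (False, i) \<and> v = (True, j)) \<or> (u = (True, j) \<and> v = (False, i))))"

definition spread :: "nat \<Rightarrow> real \<Rightarrow> (nat \<times> nat) set pmf \<Rightarrow> bool" where
  "spread n q P \<longleftrightarrow> set_pmf P \<subseteq> Pow (KEdges n) \<and>
     (\<forall>S. S \<subseteq> KEdges n \<longrightarrow> measure_pmf.prob P {H. S \<subseteq> H} \<le> q ^ card S)"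

definition bad_config :: "nat \<Rightarrow> (nat \<times> nat) set \<Rightarrow> bool" where
  "bad_config n H \<longleftrightarrow> (\<exists>S T f.
     S \<subseteq> KVert n \<and> T \<subseteq> KVert n \<and> S \<inter> T = {} \<and> S \<noteq> {} \<and>
     card T = 20 * card S \<and> real (card T) < sqrt (real n) \<and>
     inj_on f T \<and>
     (\<forall>t\<in>T. \<exists>a b. f t = {a, b} \<and> a \<noteq> b \<and> a \<in> S \<and> b \<in> S \<and> adj H t a \<and> adj H t b))"

end

theory Submission
  imports Defs
begin

lemma pow_fact_le_exp:
  fixes x :: real and k :: nat assumes "x \<ge> 0"
  shows "x ^ k / fact k \<le> exp x"
proof -
  have "(\<lambda>n. x^n /\<^sub>R fact n) sums exp x" by (rule exp_converges)
  hence sm: "summable (\<lambda>n. x^n /\<^sub>R fact n)" and eq: "exp x = (\<Sum>n. x^n /\<^sub>R fact n)"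
    by (auto simp: sums_iff)
  have "sum (\<lambda>n. x^n /\<^sub>R fact n) {k} \<le> (\<Sum>n. x^n /\<^sub>R fact n)"
    by (rule sum_le_suminf[OF sm]) (use assms in auto)
  thus ?thesis using eq by (simp add: divide_inverse mult.commute)
qed

lemma fact_lower:
  fixes k :: nat
  shows "real k ^ k \<le> 3 ^ k * fact k"
proof -
  have "real k ^ k / fact k \<le> exp (real k)" by (rule pow_fact_le_exp) simp
  also have "exp (real k) = exp 1 ^ k" by (simp add: exp_of_nat_mult[symmetric])
  also have "\<dots> \<le> 3 ^ k" by (rule power_mono) (use exp_le in auto)
  finally show ?thesis by (simp add: divide_le_eq)
qed

lemma alg_eq: fixes x s c :: real assumes "x > 1" "s > 0"
  shows "2*x * (6*x/(20 * s))^20 * s^40 * (c/x)^40 = 2 * (3/10)^20 * s^20 * c^40 / x^19"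
proof -
  have "(6*x/(20 * s))^20 = (3/10)^20 * x^20 / s^20" by (simp add: power_divide power_mult_distrib)
  moreover have "(c/x)^40 = c^40/x^40" by (simp add: power_divide)
  moreover have "s^40 = s^20 * s^20" by (simp flip: power_add)
  moreover have "x^40 = x * x^20 * x^19" by (simp flip: power_add power_Suc)
  ultimately show ?thesis using assms by (simp add: field_simps)
qed

lemma alg_le: fixes x s c :: real assumes x1: "x > 1" and s0: "s > 0" and c1: "c > 1"
  and s20: "20^20 * s^20 \<le> x^10" and c40: "c^40 \<le> x^5"
  shows "2 * (3/10)^20 * s^20 * c^40 / x^19 \<le> 1/x^4"
proof -
  have a: "s^20 * c^40 \<le> (x^10 / 20^20) * x^5"
    using s20 c40 by (intro mult_mono) (auto simp: le_divide_eq mult.commute)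
  have "(3/200::real)^20 \<le> (3/200)^1" by (rule power_decreasing) auto
  hence num: "(2 * (3/200::real)^20) \<le> 1" by simp
  have "2 * (3/10)^20 * s^20 * c^40 / x^19 = 2 * (3/10)^20 * (s^20 * c^40) / x^19" by simp
  also have "\<dots> \<le> 2 * (3/10)^20 * ((x^10 / 20^20) * x^5) / x^19"
    using a x1 by (intro divide_right_mono mult_left_mono) auto
  also have "\<dots> = (2 * (3/200)^20) * (x^15 / x^19)" by (simp add: power_add[symmetric] power_divide power_mult_distrib)
  also have "x^15 / x^19 = 1 / x^4" using x1 by (simp add: power_add[symmetric] field_simps)
  also have "(2 * (3/200)^20) * (1 / x^4) \<le> 1 * (1/x^4)" using x1 num by (intro mult_right_mono) auto
  finally show ?thesis by simp
qed

lemma term_bound: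
  fixes C r :: real and n s :: nat
  assumes "C>1" "r>1" "real n > (C*r)^8" "41 \<le> s" "real (20 * s) < sqrt (real n)"
  shows "real (2*n choose s) * real (2*n choose (20 * s)) * real (s^2)^(20 * s) * (C*r/real n)^(40 * s)
     \<le> (1/real n)^164"
proof -
  define x where "x = real n"
  define c where "c = C*r"
  define k where "k = 20 * s"
  have "1*1 < C*r" using assms by (intro mult_strict_mono) auto
  hence c1: "c > 1" unfolding c_def by simp
  have "1 < c^8" by (rule one_less_power[OF c1]) simp
  hence x1: "x > 1" unfolding x_def using assms(3) c_def by simp
  have s0: "real s > 0" using assms by simp
  have k0: "real k > 0" unfolding k_def using assms by simp
  have A: "real (2*n choose s) \<le> (2*x)^s"
  proof -
    have "(2*n choose s) * fact s \<le> (2*n)^s" by (rule binomial_fact_pow)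
    moreover have "(2*n choose s) \<le> (2*n choose s) * fact s" by simp
    ultimately have "(2*n choose s) \<le> (2*n)^s" by linarith
    hence "real (2*n choose s) \<le> real ((2*n)^s)" by linarith
    thus ?thesis unfolding x_def by simp
  qed
  have B: "real (2*n choose k) \<le> (6*x/real k)^k"
  proof -
    have "(2*n choose k) * fact k \<le> (2*n)^k" by (rule binomial_fact_pow)
    hence "real ((2*n choose k) * fact k) \<le> real ((2*n)^k)" by (rule of_nat_mono)
    hence b1: "real (2*n choose k) * fact k \<le> (2*x)^k" unfolding x_def by simp
    have b2: "real k ^ k \<le> 3^k * fact k" by (rule fact_lower)
    have "real (2*n choose k) * real k ^ k \<le> real (2*n choose k) * (3^k * fact k)"
      by (rule mult_left_mono[OF b2]) simp
    also have "\<dots> = 3^k * (real (2*n choose k) * fact k)" by simp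
    also have "\<dots> \<le> 3^k * (2*x)^k" by (rule mult_left_mono[OF b1]) simp
    also have "3^k * (2*x)^k = (3*(2*x))^k" by (rule power_mult_distrib[symmetric])
    also have "(3*(2*x)) = 6*x" by simp
    finally have fin: "real (2*n choose k) * real k ^ k \<le> (6*x)^k" .
    have kk: "real k ^ k > 0" using k0 by simp
    have "real (2*n choose k) \<le> (6*x)^k / real k ^ k" using fin kk by (simp add: le_divide_eq)
    thus ?thesis by (simp add: power_divide)
  qed
  have kr: "real k = 20 * real s" unfolding k_def by simp
  define Y where "Y = 2 * (3/10)^20 * real s^20 * c^40 / x^19"
  have "real (2*n choose s) * real (2*n choose (20 * s)) * real (s^2)^(20 * s) * (C*r/real n)^(40 * s)
     \<le> (2*x)^s * ((6*x/real k)^20)^s * (real s^40)^s * ((c/x)^40)^s"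
  proof -
    have "real (s^2)^(20 * s) = real s^(2*(20 * s))" by (simp only: of_nat_power power_mult)
    also have "2*(20 * s) = 40 * s" by simp
    also have "real s^(40 * s) = (real s^40)^s" by (rule power_mult)
    finally have e1: "real (s^2)^(20 * s) = (real s^40)^s" .
    have e2: "(C*r/real n)^(40 * s) = ((c/x)^40)^s" unfolding c_def x_def by (rule power_mult)
    have e3: "(6*x/real k)^k = ((6*x/real k)^20)^s" unfolding k_def by (rule power_mult)
    have B': "real (2*n choose (20 * s)) \<le> ((6*x/real k)^20)^s" using B e3 k_def by simp
    have p1: "0 \<le> (2*x)^s" using x1 by simp
    have p2: "0 \<le> real (2*n choose (20 * s))" by simp
    have p3: "0 \<le> (real s^40)^s" by simp
    have p4: "0 \<le> ((c/x)^40)^s" using x1 c1 by simp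
    have "real (2*n choose s) * real (2*n choose (20 * s)) \<le> (2*x)^s * ((6*x/real k)^20)^s"
      by (rule mult_mono[OF A B' p1 p2])
    hence "real (2*n choose s) * real (2*n choose (20 * s)) * (real s^40)^s \<le> (2*x)^s * ((6*x/real k)^20)^s * (real s^40)^s"
      by (rule mult_right_mono[OF _ p3])
    hence "real (2*n choose s) * real (2*n choose (20 * s)) * (real s^40)^s * ((c/x)^40)^s \<le> (2*x)^s * ((6*x/real k)^20)^s * (real s^40)^s * ((c/x)^40)^s"
      by (rule mult_right_mono[OF _ p4])
    thus ?thesis unfolding e1 e2 .
  qed
  also have "\<dots> = (2*x * (6*x/real k)^20 * real s^40 * (c/x)^40)^s"
    by (simp only: power_mult_distrib)
  also have "2*x * (6*x/real k)^20 * real s^40 * (c/x)^40 = Y"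
    unfolding Y_def kr by (rule alg_eq[OF x1 s0])
  also have "Y \<le> 1/x^4"
  proof -
    have "(real (20 * s))^2 \<le> (sqrt x)^2" unfolding x_def using assms(5)
      by (intro power_mono) auto
    also have "(sqrt x)^2 = x" using x1 by simp
    finally have "(real (20 * s))^2 \<le> x" .
    hence "((real (20 * s))^2)^10 \<le> x^10" by (rule power_mono) simp
    moreover have "((real (20 * s))^2)^10 = real (20 * s)^(2*10)" by (rule power_mult[symmetric])
    moreover have "real (20 * s)^(2*10) = (20 * real s)^20" by simp
    moreover have "(20 * real s)^20 = 20^20 * real s^20" by (rule power_mult_distrib)
    ultimately have s20: "20^20 * real s^20 \<le> x^10" by simp
    have "(c^8)^5 \<le> x^5" using assms(3) c1 unfolding c_def x_def
      by (intro power_mono) auto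
    moreover have "(c^8)^5 = c^(8*5)" by (rule power_mult[symmetric])
    ultimately have c40: "c^40 \<le> x^5" by simp
    show ?thesis unfolding Y_def by (rule alg_le[OF x1 s0 c1 s20 c40])
  qed
  hence "Y^s \<le> (1/x^4)^s" using x1 s0 c1 unfolding Y_def
    by (intro power_mono) (auto intro!: divide_nonneg_pos mult_nonneg_nonneg)
  also have "\<dots> \<le> (1/x^4)^41" using x1 assms(4)
    by (intro power_decreasing) auto
  also have "\<dots> = (1/x)^(4*41)" by (simp only: power_mult power_one_over)
  also have "\<dots> = (1/real n)^164" unfolding x_def by simp
  finally show ?thesis .
qed

definition edge :: "bool \<times> nat \<Rightarrow> bool \<times> nat \<Rightarrow> nat \<times> nat" where
  "edge u v = (if fst u then (snd v, snd u) else (snd u, snd v))"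

lemma adj_edge: "adj H t a \<Longrightarrow> edge t a \<in> H \<and> fst t \<noteq> fst a"
  unfolding adj_def edge_def by auto

lemma edge_inj: "fst t \<noteq> fst a \<Longrightarrow> fst t' \<noteq> fst a' \<Longrightarrow> edge t a = edge t' a' \<Longrightarrow>
   (t = t' \<and> a = a') \<or> (t = a' \<and> a = t')"
  by (cases "fst t"; cases "fst t'") (auto simp: edge_def prod_eq_iff)

definition Pairs :: "(bool \<times> nat) set \<Rightarrow> (bool \<times> nat) set set" where
  "Pairs S = {A. A \<subseteq> S \<and> card A = 2}"

definition Dom :: "nat \<Rightarrow> nat \<Rightarrow> ((bool \<times> nat) set \<times> (bool \<times> nat) set \<times> ((bool \<times> nat) \<Rightarrow> (bool \<times> nat) set)) set" where
  "Dom n s = {(S,T,g). S \<subseteq> KVert n \<and> card S = s \<and> T \<subseteq> KVert n \<and> card T = 20 * s \<and> S \<inter> T = {}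
     \<and> g \<in> T \<rightarrow>\<^sub>E Pairs S \<and> (\<forall>t\<in>T. \<forall>a\<in>g t. fst t \<noteq> fst a)}"

definition Edg :: "(bool \<times> nat) set \<times> (bool \<times> nat) set \<times> ((bool \<times> nat) \<Rightarrow> (bool \<times> nat) set) \<Rightarrow> (nat \<times> nat) set" where
  "Edg d = (case d of (S,T,g) \<Rightarrow> (\<lambda>(t,a). edge t a) ` (SIGMA t:T. g t))"

lemma finite_KVert: "finite (KVert n)" unfolding KVert_def by simp
lemma card_KVert: "card (KVert n) = 2 * n" unfolding KVert_def by (simp add: card_cartesian_product)

lemma finite_Pairs: "finite S \<Longrightarrow> finite (Pairs S)" unfolding Pairs_def
  by (rule finite_subset[of _ "Pow S"]) auto

lemma card_Pairs: "finite S \<Longrightarrow> card (Pairs S) = card S choose 2" unfolding Pairs_def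
  by (rule n_subsets)

definition BigSig :: "nat \<Rightarrow> nat \<Rightarrow> ((bool \<times> nat) set \<times> (bool \<times> nat) set \<times> ((bool \<times> nat) \<Rightarrow> (bool \<times> nat) set)) set" where
  "BigSig n s = (SIGMA S:{S. S \<subseteq> KVert n \<and> card S = s}. SIGMA T:{T. T \<subseteq> KVert n \<and> card T = 20 * s}. T \<rightarrow>\<^sub>E Pairs S)"

lemma Dom_sub: "Dom n s \<subseteq> BigSig n s"
  unfolding Dom_def BigSig_def by auto

lemma BigSig_finite_card:
  "finite (BigSig n s) \<and> card (BigSig n s) = (2*n choose s) * ((2*n choose (20 * s)) * (s choose 2)^(20 * s))"
proof -
  let ?A = "{S. S \<subseteq> KVert n \<and> card S = s}"
  let ?B = "{T. T \<subseteq> KVert n \<and> card T = 20 * s}"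
  have fA: "finite ?A" by (rule finite_subset[of _ "Pow (KVert n)"]) (auto simp: finite_KVert)
  have fB: "finite ?B" by (rule finite_subset[of _ "Pow (KVert n)"]) (auto simp: finite_KVert)
  have cA: "card ?A = 2*n choose s" using n_subsets[OF finite_KVert, of n s] by (simp add: card_KVert)
  have cB: "card ?B = 2*n choose (20 * s)" using n_subsets[OF finite_KVert, of n "20 * s"] by (simp add: card_KVert)
  have fin_S: "S \<in> ?A \<Longrightarrow> finite S" for S using finite_subset finite_KVert by blast
  have fin_T: "T \<in> ?B \<Longrightarrow> finite T" for T using finite_subset finite_KVert by blast
  have fPi: "S \<in> ?A \<Longrightarrow> T \<in> ?B \<Longrightarrow> finite (T \<rightarrow>\<^sub>E Pairs S)" for S T
    by (intro finite_PiE fin_T finite_Pairs fin_S) auto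
  have cPi: "S \<in> ?A \<Longrightarrow> T \<in> ?B \<Longrightarrow> card (T \<rightarrow>\<^sub>E Pairs S) = (s choose 2)^(20 * s)" for S T
    using card_PiE[OF fin_T, of T "\<lambda>_. Pairs S"] card_Pairs[OF fin_S, of S] by simp
  have fin2: "finite (SIGMA T:?B. T \<rightarrow>\<^sub>E Pairs S)" if SA: "S \<in> ?A" for S
  proof (rule finite_SigmaI[OF fB])
    fix T assume "T \<in> ?B"
    thus "finite (T \<rightarrow>\<^sub>E Pairs S)" by (rule fPi[OF SA])
  qed
  have c2: "S \<in> ?A \<Longrightarrow> card (SIGMA T:?B. T \<rightarrow>\<^sub>E Pairs S) = (2*n choose (20 * s)) * (s choose 2)^(20 * s)" for S
  proof -
    assume SA: "S \<in> ?A"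
    have "card (SIGMA T:?B. T \<rightarrow>\<^sub>E Pairs S) = (\<Sum>T\<in>?B. card (T \<rightarrow>\<^sub>E Pairs S))"
      by (rule card_SigmaI[OF fB]) (use fPi[OF SA] in blast)
    also have "\<dots> = (\<Sum>T\<in>?B. (s choose 2)^(20 * s))" by (rule sum.cong) (use cPi[OF SA] in auto)
    finally show ?thesis using cB by simp
  qed
  have "finite (BigSig n s)" unfolding BigSig_def by (rule finite_SigmaI[OF fA fin2])
  moreover have "card (BigSig n s) = (2*n choose s) * ((2*n choose (20 * s)) * (s choose 2)^(20 * s))"
  proof -
    have "card (BigSig n s) = (\<Sum>S\<in>?A. card (SIGMA T:?B. T \<rightarrow>\<^sub>E Pairs S))"
      unfolding BigSig_def by (rule card_SigmaI[OF fA]) (use fin2 in blast)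
    also have "\<dots> = (\<Sum>S\<in>?A. (2*n choose (20 * s)) * (s choose 2)^(20 * s))"
      by (rule sum.cong) (use c2 in auto)
    finally show ?thesis using cA by simp
  qed
  ultimately show ?thesis by blast
qed

lemma Edg_props:
  assumes "d \<in> Dom n s"
  shows "Edg d \<subseteq> KEdges n \<and> card (Edg d) = 40 * s"
proof -
  obtain S T g where d: "d = (S,T,g)" by (cases d) auto
  have S: "S \<subseteq> KVert n" and cS: "card S = s" and T: "T \<subseteq> KVert n" and cT: "card T = 20 * s"
    and disj: "S \<inter> T = {}" and g: "g \<in> T \<rightarrow>\<^sub>E Pairs S" and side: "\<forall>t\<in>T. \<forall>a\<in>g t. fst t \<noteq> fst a"
    using assms unfolding d Dom_def by auto
  have gt: "t \<in> T \<Longrightarrow> g t \<subseteq> S \<and> card (g t) = 2" for t using g unfolding Pairs_def by auto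
  have finT: "finite T" using T finite_KVert finite_subset by blast
  have finS: "finite S" using S finite_KVert finite_subset by blast
  have fg: "t \<in> T \<Longrightarrow> finite (g t)" for t using gt finS finite_subset by blast
  have cSig: "card (SIGMA t:T. g t) = 40 * s"
  proof -
    have "card (SIGMA t:T. g t) = (\<Sum>t\<in>T. card (g t))" using finT fg by (subst card_SigmaI) auto
    also have "\<dots> = (\<Sum>t\<in>T. 2)" using gt by (intro sum.cong) auto
    finally show ?thesis using cT by simp
  qed
  have inj: "inj_on (\<lambda>(t,a). edge t a) (SIGMA t:T. g t)"
  proof (rule inj_onI)
    fix p q assume p: "p \<in> (SIGMA t:T. g t)" and q: "q \<in> (SIGMA t:T. g t)"
      and e: "(\<lambda>(t,a). edge t a) p = (\<lambda>(t,a). edge t a) q"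
    obtain t a where pp: "p = (t,a)" by (cases p) auto
    obtain t' a' where qq: "q = (t',a')" by (cases q) auto
    have tT: "t \<in> T" "a \<in> g t" "t' \<in> T" "a' \<in> g t'" using p q pp qq by auto
    have aS: "a \<in> S" "a' \<in> S" using gt[OF tT(1)] gt[OF tT(3)] tT(2,4) by blast+
    have "(t = t' \<and> a = a') \<or> (t = a' \<and> a = t')"
      by (rule edge_inj) (use side tT e pp qq in auto)
    moreover have "\<not> (t = a' \<and> a = t')" using disj aS tT by auto
    ultimately show "p = q" using pp qq by auto
  qed
  have "card (Edg d) = 40 * s" unfolding d Edg_def using inj cSig by (simp add: card_image)
  moreover have "Edg d \<subseteq> KEdges n"
  proof
    fix e assume "e \<in> Edg d"
    then obtain t a where ta: "t \<in> T" "a \<in> g t" "e = edge t a" unfolding d Edg_def by auto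
    have "t \<in> KVert n" using T ta(1) by blast
    moreover have "a \<in> KVert n" using gt[OF ta(1)] ta(2) S by blast
    ultimately show "e \<in> KEdges n" using ta unfolding KEdges_def KVert_def edge_def by auto
  qed
  ultimately show ?thesis by blast
qed

definition R :: "nat \<Rightarrow> nat set" where
  "R n = {s. 41 \<le> s \<and> s \<le> 2 * n \<and> real (20 * s) < sqrt (real n)}"

lemma bad_cover:
  assumes "bad_config n H"
  shows "\<exists>s\<in>R n. \<exists>d\<in>Dom n s. Edg d \<subseteq> H"
proof -
  obtain S T f where S: "S \<subseteq> KVert n" and T: "T \<subseteq> KVert n" and disj: "S \<inter> T = {}" and ne: "S \<noteq> {}"
    and cT: "card T = 20 * card S" and sq: "real (card T) < sqrt (real n)" and inj: "inj_on f T"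
    and pr: "\<forall>t\<in>T. \<exists>a b. f t = {a, b} \<and> a \<noteq> b \<and> a \<in> S \<and> b \<in> S \<and> adj H t a \<and> adj H t b"
    using assms unfolding bad_config_def by blast
  define s where "s = card S"
  have finS: "finite S" using S finite_KVert finite_subset by blast
  have s0: "s > 0" using finS ne unfolding s_def by (simp add: card_gt_0_iff)
  have fP: "f t \<in> Pairs S" if tT: "t \<in> T" for t
  proof -
    obtain a b where "f t = {a, b}" "a \<noteq> b" "a \<in> S" "b \<in> S" using pr tT by blast
    thus ?thesis unfolding Pairs_def by simp
  qed
  have fadj: "adj H t a" if tT: "t \<in> T" and aT: "a \<in> f t" for t a
  proof -
    obtain a0 b0 where "f t = {a0, b0}" "adj H t a0" "adj H t b0" using pr tT by blast
    thus ?thesis using aT by auto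
  qed
  define g where "g = restrict f T"
  have gP: "g \<in> T \<rightarrow>\<^sub>E Pairs S" unfolding g_def restrict_PiE_iff using fP by blast
  have gside: "\<forall>t\<in>T. \<forall>a\<in>g t. fst t \<noteq> fst a" unfolding g_def using fadj adj_edge by fastforce
  have d: "(S,T,g) \<in> Dom n s"
    unfolding Dom_def s_def using S T disj cT gP gside s_def by simp
  have E: "Edg (S,T,g) \<subseteq> H"
  proof
    fix e assume "e \<in> Edg (S,T,g)"
    then obtain t a where "t \<in> T" "a \<in> g t" "e = edge t a" unfolding Edg_def by auto
    thus "e \<in> H" using fadj adj_edge unfolding g_def by auto
  qed
  have "f ` T \<subseteq> Pairs S" using fP by auto
  hence "card (f ` T) \<le> card (Pairs S)" using finite_Pairs[OF finS] by (rule card_mono[rotated])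
  hence "20 * s \<le> s * (s - 1) div 2" using card_image[OF inj] cT card_Pairs[OF finS] choose_two
    unfolding s_def by simp
  hence "s * 40 \<le> s * (s - 1)" by linarith
  hence "40 \<le> s - 1" using s0 by simp
  hence s41: "41 \<le> s" by simp
  have "s \<le> 2 * n" unfolding s_def using card_mono[OF finite_KVert S] card_KVert by simp
  hence "s \<in> R n" unfolding R_def using s41 sq cT s_def by simp
  thus ?thesis using d E by blast
qed


lemma finite_R: "finite (R n)" unfolding R_def by (rule finite_subset[of _ "{..2*n}"]) auto

lemma card_R: "card (R n) \<le> 2 * n"
proof -
  have "card (R n) \<le> card {1..2*n}" unfolding R_def by (rule card_mono) auto
  thus ?thesis by simp
qed

theorem lemma2p7:
  fixes C r :: real and n :: nat and P :: "(nat \<times> nat) set pmf"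
  assumes "C > 1" and "r > 1" and "real n > (C * r) ^ 8"
    and "spread n (C * r / real n) P"
  shows "measure_pmf.prob P {H. \<not> bad_config n H} \<ge> 1 - 1 / real n ^ 40"
proof -
  define q where "q = C * r / real n"
  have "1*1 < C*r" using assms by (intro mult_strict_mono) auto
  hence c1: "C * r > 1" by simp
  have "1 < (C*r)^8" by (rule one_less_power[OF c1]) simp
  hence n1: "real n > 1" using assms(3) by simp
  hence n2: "n \<ge> 2" by simp
  have q0: "q \<ge> 0" unfolding q_def using c1 n1 by simp
  have spr: "\<And>S. S \<subseteq> KEdges n \<Longrightarrow> measure_pmf.prob P {H. S \<subseteq> H} \<le> q ^ card S"
    using assms(4) unfolding spread_def q_def by blast
  let ?U = "\<lambda>s. \<Union>d\<in>Dom n s. {H. Edg d \<subseteq> H}"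
  have finDom: "finite (Dom n s)" for s
    using BigSig_finite_card[of n s] Dom_sub[of n s] finite_subset by blast
  have "{H. bad_config n H} \<subseteq> (\<Union>s\<in>R n. ?U s)" using bad_cover by blast
  hence "measure_pmf.prob P {H. bad_config n H} \<le> measure_pmf.prob P (\<Union>s\<in>R n. ?U s)"
    by (intro measure_pmf.finite_measure_mono) auto
  also have "\<dots> \<le> (\<Sum>s\<in>R n. measure_pmf.prob P (?U s))"
    by (rule measure_pmf.finite_measure_subadditive_finite[OF finite_R]) auto
  also have "\<dots> \<le> (\<Sum>s\<in>R n. (1 / real n) ^ 164)"
  proof (rule sum_mono)
    fix s assume sR: "s \<in> R n"
    have s41: "41 \<le> s" and sq: "real (20 * s) < sqrt (real n)" using sR unfolding R_def by auto
    have "measure_pmf.prob P (?U s) \<le> (\<Sum>d\<in>Dom n s. measure_pmf.prob P {H. Edg d \<subseteq> H})"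
      by (rule measure_pmf.finite_measure_subadditive_finite[OF finDom]) auto
    also have "\<dots> \<le> (\<Sum>d\<in>Dom n s. q ^ (40 * s))"
    proof (rule sum_mono)
      fix d assume "d \<in> Dom n s"
      from Edg_props[OF this] show "measure_pmf.prob P {H. Edg d \<subseteq> H} \<le> q ^ (40 * s)"
        using spr by metis
    qed
    also have "\<dots> = real (card (Dom n s)) * q ^ (40 * s)" by simp
    also have "\<dots> \<le> real ((2*n choose s) * ((2*n choose (20 * s)) * (s choose 2)^(20 * s))) * q ^ (40 * s)"
    proof -
      have "card (Dom n s) \<le> card (BigSig n s)"
        using BigSig_finite_card[of n s] Dom_sub[of n s] by (intro card_mono) auto
      hence "card (Dom n s) \<le> (2*n choose s) * ((2*n choose (20 * s)) * (s choose 2)^(20 * s))"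
        using BigSig_finite_card[of n s] by simp
      hence "real (card (Dom n s)) \<le> real ((2*n choose s) * ((2*n choose (20 * s)) * (s choose 2)^(20 * s)))"
        by (rule of_nat_mono)
      thus ?thesis by (rule mult_right_mono) (simp add: q0)
    qed
    also have "\<dots> \<le> real (2*n choose s) * real (2*n choose (20 * s)) * real (s^2)^(20 * s) * (C*r/real n)^(40 * s)"
    proof -
      have "s choose 2 \<le> s^2" using s41 by (intro binomial_le_pow) auto
      hence "(s choose 2)^(20 * s) \<le> (s^2)^(20 * s)" by (rule power_mono) simp
      hence "real ((s choose 2)^(20 * s)) \<le> real (s^2)^(20 * s)"
        by (metis of_nat_le_iff of_nat_power)
      hence "real (2*n choose s) * real (2*n choose (20 * s)) * real ((s choose 2)^(20 * s)) \<le>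
             real (2*n choose s) * real (2*n choose (20 * s)) * real (s^2)^(20 * s)"
        by (intro mult_left_mono) auto
      thus ?thesis unfolding q_def[symmetric] using q0
        by (intro mult_right_mono) (auto simp: mult.assoc)
    qed
    also have "\<dots> \<le> (1/real n)^164" by (rule term_bound[OF assms(1,2,3) s41 sq])
    finally show "measure_pmf.prob P (?U s) \<le> (1 / real n) ^ 164" .
  qed
  also have "\<dots> = real (card (R n)) * (1/real n)^164" by simp
  also have "\<dots> \<le> real (2 * n) * (1/real n)^164"
    using card_R[of n] by (intro mult_right_mono) auto
  also have "\<dots> \<le> (1/real n)^40"
  proof -
    define y where "y = 1 / real n"
    have y0: "y > 0" "2 * y \<le> 1" "y \<le> 1" unfolding y_def using n1 n2 by (auto simp: field_simps)
    have "real (2*n) * y^164 = (2 * real n * y) * y^163" by (simp add: power_Suc[symmetric] del: power_Suc)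
    also have "2 * real n * y = 2" unfolding y_def using n1 by simp
    also have "2 * y^163 = (2*y) * y^162" by (simp add: power_Suc[symmetric] del: power_Suc)
    also have "\<dots> \<le> 1 * y^162" using y0 by (intro mult_right_mono) auto
    also have "\<dots> \<le> y^40" using y0 by (simp add: power_decreasing)
    finally show ?thesis unfolding y_def .
  qed
  finally have bad: "measure_pmf.prob P {H. bad_config n H} \<le> (1/real n)^40" .
  have "measure_pmf.prob P {H. \<not> bad_config n H} = measure_pmf.prob P (UNIV - {H. bad_config n H})"
    by (rule arg_cong[where f="measure_pmf.prob P"]) auto
  also have "\<dots> = 1 - measure_pmf.prob P {H. bad_config n H}"
    using measure_pmf.prob_compl[of "{H. bad_config n H}" P] by simp
  finally show ?thesis using bad by (simp add: power_one_over)
qed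

end
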